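(* Let $I \subset \mathbb{R}$ be a closed interval, let $0<\alpha\le 1$, and let $f:I\to\mathbb{R}$ be $\alpha$-H\"older continuous, i.e. there is $C>0$ with $|f(t)-f(s)|\le C|t-s|^\alpha$ for all $t,s\in I$. Then $$\dim_{A,reg}^\theta \operatorname{Graph}(f) \leq \frac{2-\alpha-\theta}{1-\theta}$$ for all $\theta\in(0,\alpha)$.
   Context: $\operatorname{Graph}(f)=\{(t,f(t)):t\in I\}\subset\mathbb{R}^2$. For a bounded set $F\subset\mathbb{R}^2$ and $r>0$, $N(F,r)$ denotes the least number of sets of diameter at most $r$ needed to cover $F$, and $D(\mathbf z,R)$ is the closed disc of radius $R$ centered at $\mathbf z$. For $E\subset\mathbb{R}^2$ and $\theta\in(0,1)$, the regularized (upper) Assouad spectrum is $$\dim_{A,reg}^\theta(E)=\inf\{\gamma>0:\ \exists C>0 \text{ such that } N(D(\mathbf z,R)\cap E,r)\le C(R/r)^\gamma \text{ for all } 0<r\le R^{1/\theta}<R<1 \text{ and all } \mathbf z\in E\}.$$ Equivalently, $\dim_{A,reg}^\theta(E)=\sup_{0<\theta'<\theta}\dim_A^{\theta'}(E)$, where $\dim_A^{\theta}(E)$ is defined in the same way but with the scales restricted to $r=R^{1/\theta}$. *)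

theory Defs
  imports "HOL-Analysis.Analysis"
begin

text \<open>Graph of f over I, as a subset of the plane (real \<times> real carries the Euclidean metric).\<close>
definition graph_of :: "(real \<Rightarrow> real) \<Rightarrow> real set \<Rightarrow> (real \<times> real) set" where
  "graph_of f I = {(t, f t) | t. t \<in> I}"

text \<open>N(F,r): least number of sets of diameter at most r needed to cover F.
  Covering sets are required to be bounded so that diameter is meaningful.\<close>
definition cover_num :: "(real \<times> real) set \<Rightarrow> real \<Rightarrow> nat" where
  "cover_num F r = (LEAST n. \<exists>C. finite C \<and> card C = n \<and>
       (\<forall>S\<in>C. bounded S \<and> diameter S \<le> r) \<and> F \<subseteq> \<Union>C)"

text \<open>Regularized (upper) Assouad spectrum, valued in ereal (Inf of the empty set is \<infinity>).\<close>
definition assouad_spec_reg :: "real \<Rightarrow> (real \<times> real) set \<Rightarrow> ereal" where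
  "assouad_spec_reg \<theta> E = Inf {ereal \<gamma> | \<gamma>. \<gamma> > 0 \<and>
     (\<exists>C>0. \<forall>r R z. 0 < r \<and> 0 < R \<and> r \<le> R powr (1/\<theta>) \<and> R powr (1/\<theta>) < R \<and> R < 1 \<and> z \<in> E
        \<longrightarrow> real (cover_num (cball z R \<inter> E) r) \<le> C * (R / r) powr \<gamma>)}"

end

theory Submission
  imports Defs
begin

lemma norm_pair_le: "norm ((p::real\<times>real) - q) \<le> \<bar>fst p - fst q\<bar> + \<bar>snd p - snd q\<bar>"
  using sqrt_sum_squares_le_sum_abs[of "fst p - fst q" "snd p - snd q"]
  by (simp add: norm_prod_def)

lemma floor_diff_bound:
  fixes x y d :: real
  assumes "\<bar>x - y\<bar> \<le> d"
  shows "\<bar>\<lfloor>x\<rfloor> - \<lfloor>y\<rfloor>\<bar> \<le> \<lceil>d\<rceil> + 1"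
proof -
  have a: "real_of_int \<lfloor>x\<rfloor> \<le> x" "x < real_of_int \<lfloor>x\<rfloor> + 1" by linarith+
  have b: "real_of_int \<lfloor>y\<rfloor> \<le> y" "y < real_of_int \<lfloor>y\<rfloor> + 1" by linarith+
  have c: "d \<le> real_of_int \<lceil>d\<rceil>" by linarith
  have "real_of_int \<lfloor>x\<rfloor> < real_of_int \<lfloor>y\<rfloor> + 1 + real_of_int \<lceil>d\<rceil>"
    using a b c assms by linarith
  moreover have "real_of_int \<lfloor>y\<rfloor> < real_of_int \<lfloor>x\<rfloor> + 1 + real_of_int \<lceil>d\<rceil>"
    using a b c assms by linarith
  ultimately have "\<lfloor>x\<rfloor> < \<lfloor>y\<rfloor> + 1 + \<lceil>d\<rceil>" "\<lfloor>y\<rfloor> < \<lfloor>x\<rfloor> + 1 + \<lceil>d\<rceil>"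
    by linarith+
  then show ?thesis by linarith
qed

lemma same_floor: 
  fixes x y s :: real
  assumes "s > 0" "\<lfloor>x / s\<rfloor> = \<lfloor>y / s\<rfloor>"
  shows "\<bar>x - y\<bar> < s"
proof -
  have "\<bar>x/s - y/s\<bar> < 1" using assms(2) by linarith
  then have "\<bar>(x - y)/s\<bar> < 1" by (simp add: diff_divide_distrib)
  moreover have "\<bar>(x - y)/s\<bar> = \<bar>x - y\<bar>/s" by (simp add: abs_divide abs_of_pos[OF assms(1)])
  ultimately have "\<bar>x - y\<bar>/s < 1" by linarith
  then show ?thesis using pos_divide_less_eq[OF assms(1)] by simp
qed

lemma cover_bound:
  fixes f :: "real \<Rightarrow> real" and H s R \<alpha> t0 a b :: real
  assumes H: "H > 0" and hold: "\<forall>t\<in>{a..b}. \<forall>u\<in>{a..b}. \<bar>f t - f u\<bar> \<le> H * \<bar>t - u\<bar> powr \<alpha>"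
    and \<alpha>: "0 < \<alpha>" and s: "s > 0" and R: "R > 0" and t0: "t0 \<in> {a..b}"
  shows "real (cover_num (cball (t0, f t0) R \<inter> graph_of f {a..b}) (2 * s))
           \<le> (2*R/s + 2) * (2*H * s powr (\<alpha>-1) + 5)"
proof -
  define F where "F = cball (t0, f t0) R \<inter> graph_of f {a..b}"
  define \<phi> where "\<phi> = (\<lambda>p::real\<times>real. (\<lfloor>(fst p - t0)/s\<rfloor>, \<lfloor>snd p / s\<rfloor>))"
  define C where "C = (\<lambda>k. {p\<in>F. \<phi> p = k}) ` (\<phi> ` F)"
  define K :: int where "K = \<lceil>H * s powr (\<alpha>-1)\<rceil> + 1"
  define I0 where "I0 = {\<lfloor>-R/s\<rfloor>..\<lfloor>R/s\<rfloor>}"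
  define col where "col = (\<lambda>i::int. SOME t. t \<in> {a..b} \<and> \<lfloor>(t - t0)/s\<rfloor> = i)"
  define c where "c = (\<lambda>i. \<lfloor>f (col i) / s\<rfloor>)"
  have sub: "\<phi> ` F \<subseteq> Sigma I0 (\<lambda>i. {c i - K .. c i + K})"
  proof
    fix k assume "k \<in> \<phi> ` F"
    then obtain p where p: "p \<in> F" "k = \<phi> p" by blast
    have pg: "p \<in> graph_of f {a..b}" using p(1) unfolding F_def by blast
    then obtain t where t: "t \<in> {a..b}" "p = (t, f t)" unfolding graph_of_def by blast
    have "p \<in> cball (t0, f t0) R" using p(1) unfolding F_def by blast
    then have dist: "dist (t0, f t0) (t, f t) \<le> R" using t(2) by simp
    have "dist t0 t \<le> R" using dist dist_fst_le[of "(t0, f t0)" "(t, f t)"] by simp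
    then have tt: "-R \<le> t - t0" "t - t0 \<le> R" by (auto simp: dist_real_def)
    define i where "i = \<lfloor>(t - t0)/s\<rfloor>"
    have "-R/s \<le> (t - t0)/s" "(t - t0)/s \<le> R/s" using tt s divide_right_mono[of "-R" "t - t0" s] divide_right_mono[of "t - t0" R s] by auto
    then have iI: "i \<in> I0" unfolding I0_def i_def by (auto intro: floor_mono)
    have ex: "\<exists>t'. t' \<in> {a..b} \<and> \<lfloor>(t'-t0)/s\<rfloor> = i" using t i_def by auto
    have ci: "col i \<in> {a..b} \<and> \<lfloor>(col i - t0)/s\<rfloor> = i"
      unfolding col_def by (rule someI_ex[OF ex])
    have "\<bar>(t - t0) - (col i - t0)\<bar> < s" using same_floor[OF s] ci i_def by metis
    then have d1: "\<bar>t - col i\<bar> < s" by simp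
    have "\<bar>f t - f (col i)\<bar> \<le> H * \<bar>t - col i\<bar> powr \<alpha>" using hold t ci by auto
    also have "\<dots> \<le> H * s powr \<alpha>" using d1 H \<alpha>
      by (intro mult_left_mono powr_mono2) auto
    finally have d2: "\<bar>f t - f (col i)\<bar> \<le> H * s powr \<alpha>" .
    have "\<bar>f t / s - f (col i) / s\<bar> = \<bar>(f t - f (col i)) / s\<bar>"
      by (simp only: diff_divide_distrib)
    also have "\<dots> = \<bar>f t - f (col i)\<bar> / s" using s by simp
    also have "\<dots> \<le> H * s powr \<alpha> / s" using d2 s by (simp add: divide_right_mono)
    also have "\<dots> = H * s powr (\<alpha> - 1)" using s by (simp add: powr_diff powr_one)
    finally have "\<bar>\<lfloor>f t / s\<rfloor> - \<lfloor>f (col i) / s\<rfloor>\<bar> \<le> K"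
      unfolding K_def by (rule floor_diff_bound)
    then have "snd k \<in> {c i - K .. c i + K}" using p t unfolding \<phi>_def c_def by auto
    moreover have "fst k = i" using p t unfolding \<phi>_def i_def by auto
    ultimately have "k = (i, snd k)" by (metis prod.collapse)
    moreover note \<open>snd k \<in> {c i - K .. c i + K}\<close>
    ultimately show "k \<in> Sigma I0 (\<lambda>i. {c i - K .. c i + K})" using iI
      by (metis SigmaI)
  qed
  have finS: "finite (Sigma I0 (\<lambda>i. {c i - K .. c i + K}))" unfolding I0_def by auto
  have cardS: "card (Sigma I0 (\<lambda>i. {c i - K .. c i + K})) = card I0 * nat (2*K+1)"
    unfolding I0_def by simp
  have finP: "finite (\<phi> ` F)" using finite_subset[OF sub finS] .
  have cardC: "card C \<le> card (Sigma I0 (\<lambda>i. {c i - K .. c i + K}))"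
    unfolding C_def using card_image_le[OF finP, of "\<lambda>k. {p\<in>F. \<phi> p = k}"] card_mono[OF finS sub] by linarith
  have cov: "finite C \<and> card C = card C \<and> (\<forall>S\<in>C. bounded S \<and> diameter S \<le> 2 * s) \<and> F \<subseteq> \<Union>C"
  proof (intro conjI ballI)
    show "finite C" unfolding C_def using finP by simp
    show "card C = card C" by (rule refl)
    show "F \<subseteq> \<Union>C" unfolding C_def by auto
    fix S assume "S \<in> C"
    then obtain k where k: "S = {p\<in>F. \<phi> p = k}" unfolding C_def by auto
    have "S \<subseteq> cball (t0, f t0) R" using k F_def by auto
    then show "bounded S" using bounded_subset[OF bounded_cball] by blast
    show "diameter S \<le> 2 * s"
    proof (rule diameter_le)
      show "S \<noteq> {} \<or> 0 \<le> 2 * s" using s by simp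
      fix x y assume xy: "x \<in> S" "y \<in> S"
      then have "\<phi> x = \<phi> y" using k by auto
      then have e1: "\<lfloor>(fst x - t0)/s\<rfloor> = \<lfloor>(fst y - t0)/s\<rfloor>" and e2: "\<lfloor>snd x/s\<rfloor> = \<lfloor>snd y/s\<rfloor>"
        unfolding \<phi>_def by auto
      have "\<bar>(fst x - t0) - (fst y - t0)\<bar> < s" using same_floor[OF s e1] .
      then have "\<bar>fst x - fst y\<bar> < s" by simp
      moreover have "\<bar>snd x - snd y\<bar> < s" using same_floor[OF s e2] .
      ultimately show "norm (x - y) \<le> 2 * s" using norm_pair_le[of x y] by linarith
    qed
  qed
  have "cover_num F (2 * s) \<le> card C" unfolding cover_num_def
    by (rule Least_le) (use cov in blast)
  also have "\<dots> \<le> card I0 * nat (2*K+1)" using cardC cardS by simp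
  finally have cn: "real (cover_num F (2 * s)) \<le> real (card I0) * real (nat (2*K+1))"
    by (metis of_nat_le_iff of_nat_mult)
  have "-R/s \<le> R/s" using R s by (simp add: divide_right_mono)
  then have "\<lfloor>-R/s\<rfloor> \<le> \<lfloor>R/s\<rfloor>" by (rule floor_mono)
  then have "real (card I0) = real_of_int (\<lfloor>R/s\<rfloor> - \<lfloor>-R/s\<rfloor> + 1)"
    unfolding I0_def card_atLeastAtMost_int by simp
  also have "\<dots> \<le> 2*R/s + 2" by linarith
  finally have c1: "real (card I0) \<le> 2*R/s + 2" .
  have "0 \<le> H * s powr (\<alpha>-1)" using H s by simp
  then have "K \<ge> 0" unfolding K_def by linarith
  then have "real (nat (2*K+1)) = 2 * real_of_int K + 1" by simp
  also have "\<dots> \<le> 2*H * s powr (\<alpha>-1) + 5"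
  proof -
    have "real_of_int \<lceil>H * s powr (\<alpha>-1)\<rceil> < H * s powr (\<alpha>-1) + 1" by linarith
    then show ?thesis unfolding K_def by simp
  qed
  finally have c2: "real (nat (2*K+1)) \<le> 2*H * s powr (\<alpha>-1) + 5" .
  have "real (card I0) * real (nat (2*K+1)) \<le> (2*R/s + 2) * (2*H * s powr (\<alpha>-1) + 5)"
    using c1 c2 by (intro mult_mono) auto
  with cn show ?thesis unfolding F_def by linarith
qed


lemma key_ineq:
  fixes r R \<alpha> \<theta> :: real
  assumes r: "0 < r" and rR: "r \<le> R powr (1/\<theta>)" and R: "0 < R"
    and \<alpha>: "\<alpha> \<le> 1" and \<theta>: "0 < \<theta>" "\<theta> < 1"
  shows "(R/r) * r powr (\<alpha>-1) \<le> (R/r) powr ((2 - \<alpha> - \<theta>) / (1 - \<theta>))"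
proof -
  define k where "k = (1-\<alpha>)/(1-\<theta>)"
  have k0: "k \<ge> 0" unfolding k_def using \<alpha> \<theta> by simp
  have g: "(2 - \<alpha> - \<theta>) / (1 - \<theta>) = 1 + k" unfolding k_def using \<theta> by (simp add: field_simps)
  have e: "\<alpha> - 1 + k = \<theta> * k" unfolding k_def using \<theta> by (simp add: field_simps)
  have "r powr \<theta> \<le> (R powr (1/\<theta>)) powr \<theta>" using rR r \<theta> by (intro powr_mono2) auto
  also have "\<dots> = R" using R \<theta> by (simp add: powr_powr)
  finally have rt: "r powr \<theta> \<le> R" .
  have "r powr (\<alpha>-1) * r powr k = r powr (\<theta> * k)" using e by (simp add: powr_add[symmetric])
  also have "\<dots> = (r powr \<theta>) powr k" by (simp add: powr_powr)
  also have "\<dots> \<le> R powr k" using rt k0 r by (intro powr_mono2) auto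
  finally have "r powr (\<alpha>-1) * r powr k \<le> R powr k" .
  then have "r powr (\<alpha>-1) \<le> R powr k / r powr k" using r by (simp add: field_simps)
  also have "\<dots> = (R/r) powr k" using r R by (simp add: powr_divide)
  finally have h: "r powr (\<alpha>-1) \<le> (R/r) powr k" .
  have "(R/r) * r powr (\<alpha>-1) \<le> (R/r) * (R/r) powr k"
    using h r R by (intro mult_left_mono) auto
  also have "\<dots> = (R/r) powr (1 + k)" using r R by (simp add: powr_add)
  finally show ?thesis using g by simp
qed

theorem theorem1p1:
  fixes f :: "real \<Rightarrow> real" and a b \<alpha> \<theta> :: real
  assumes "a < b"
    and "0 < \<alpha>" and "\<alpha> \<le> 1"
    and "\<exists>C>0. \<forall>t\<in>{a..b}. \<forall>s\<in>{a..b}. \<bar>f t - f s\<bar> \<le> C * \<bar>t - s\<bar> powr \<alpha>"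
    and "0 < \<theta>" and "\<theta> < \<alpha>"
  shows "assouad_spec_reg \<theta> (graph_of f {a..b}) \<le> ereal ((2 - \<alpha> - \<theta>) / (1 - \<theta>))"
proof -
  obtain H where H: "H > 0" and hold: "\<forall>t\<in>{a..b}. \<forall>u\<in>{a..b}. \<bar>f t - f u\<bar> \<le> H * \<bar>t - u\<bar> powr \<alpha>"
    using assms(4) by blast
  define \<gamma> where "\<gamma> = (2 - \<alpha> - \<theta>) / (1 - \<theta>)"
  have \<theta>1: "\<theta> < 1" using assms by simp
  have \<gamma>1: "\<gamma> \<ge> 1" unfolding \<gamma>_def using assms \<theta>1 by (simp add: field_simps)
  define E where "E = graph_of f {a..b}"
  have main: "real (cover_num (cball z R \<inter> E) r) \<le> (24*H+30) * (R / r) powr \<gamma>"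
    if r: "0 < r" and rR: "r \<le> R powr (1/\<theta>)" and RR: "R powr (1/\<theta>) < R" and R1: "R < 1" and z: "z \<in> E"
    for r R z
  proof -
    have R: "R > 0" using RR by (smt (verit) powr_ge_zero)
    obtain t0 where t0: "t0 \<in> {a..b}" "z = (t0, f t0)" using z unfolding E_def graph_of_def by auto
    have X1: "R / r \<ge> 1" using r rR RR by simp
    have cb0: "real (cover_num (cball (t0, f t0) R \<inter> graph_of f {a..b}) (2 * (r/2)))
           \<le> (2*R/(r/2) + 2) * (2*H * (r/2) powr (\<alpha>-1) + 5)"
      by (rule cover_bound[OF H hold assms(2) _ R t0(1)]) (use r in simp)
    have eq1: "2 * (r/2) = r" by simp
    have eq2: "2*R/(r/2) = 4 * (R/r)" using r by (simp add: field_simps)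
    have cb: "real (cover_num (cball z R \<inter> E) r)
           \<le> (4 * (R/r) + 2) * (2*H * (r/2) powr (\<alpha>-1) + 5)"
      using cb0 unfolding eq1 eq2 t0(2) E_def .
    have "(r/2) powr (\<alpha>-1) = r powr (\<alpha>-1) / 2 powr (\<alpha>-1)"
      using r by (simp add: powr_divide)
    also have "\<dots> = r powr (\<alpha>-1) * 2 powr (1-\<alpha>)"
    proof -
      have h2: "2 powr (1-\<alpha>) = 1 / 2 powr (\<alpha>-1)"
        using powr_minus_divide[of "2::real" "\<alpha>-1"] by simp
      show ?thesis unfolding h2 by simp
    qed
    also have "\<dots> \<le> r powr (\<alpha>-1) * 2"
    proof -
      have "2 powr (1-\<alpha>) \<le> 2 powr 1" using assms(2) by (intro powr_mono) auto
      then show ?thesis by (intro mult_left_mono) auto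
    qed
    finally have p2: "(r/2) powr (\<alpha>-1) \<le> 2 * r powr (\<alpha>-1)" by simp
    define X where "X = R/r"
    define Q where "Q = r powr (\<alpha>-1)"
    have Q0: "Q \<ge> 0" unfolding Q_def by simp
    have "(4 * X + 2) * (2*H * (r/2) powr (\<alpha>-1) + 5) \<le> (6 * X) * (4*H*Q + 5)"
    proof (rule mult_mono)
      show "4 * X + 2 \<le> 6 * X" using X1 unfolding X_def by simp
      show "2*H * (r/2) powr (\<alpha>-1) + 5 \<le> 4*H*Q + 5" using p2 H unfolding Q_def by simp
      show "0 \<le> 6 * X" using X1 unfolding X_def by simp
      show "0 \<le> 2*H * (r/2) powr (\<alpha>-1) + 5" using H by simp
    qed
    also have "\<dots> = 24*H*(X*Q) + 30 * X" by (simp add: algebra_simps)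
    also have "\<dots> \<le> 24*H*(X powr \<gamma>) + 30 * X powr \<gamma>"
    proof -
      have "X*Q \<le> X powr \<gamma>" unfolding X_def Q_def \<gamma>_def
        by (rule key_ineq[OF r rR R assms(3) assms(5) \<theta>1])
      moreover have "X \<le> X powr \<gamma>"
      proof -
        have "X powr 1 \<le> X powr \<gamma>" using X1 \<gamma>1 unfolding X_def by (intro powr_mono) auto
        then show ?thesis using X1 r R unfolding X_def by simp
      qed
      ultimately show ?thesis using H by (intro add_mono mult_left_mono) auto
    qed
    also have "\<dots> = (24*H+30) * (R / r) powr \<gamma>" unfolding X_def by (rule sym, rule distrib_right)
    finally show ?thesis using cb unfolding X_def by linarith
  qed
  have mem: "ereal \<gamma> \<in> {ereal \<gamma> | \<gamma>. \<gamma> > 0 \<and>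
     (\<exists>C>0. \<forall>r R z. 0 < r \<and> 0 < R \<and> r \<le> R powr (1/\<theta>) \<and> R powr (1/\<theta>) < R \<and> R < 1 \<and> z \<in> E
        \<longrightarrow> real (cover_num (cball z R \<inter> E) r) \<le> C * (R / r) powr \<gamma>)}"
  proof -
    have A: "\<forall>r R z. 0 < r \<and> 0 < R \<and> r \<le> R powr (1/\<theta>) \<and> R powr (1/\<theta>) < R \<and> R < 1 \<and> z \<in> E
        \<longrightarrow> real (cover_num (cball z R \<inter> E) r) \<le> (24*H+30) * (R / r) powr \<gamma>"
      using main by blast
    have B: "(24*H+30) > 0" "\<gamma> > 0" using H \<gamma>1 by auto
    show ?thesis using A B by blast
  qed
  show ?thesis unfolding assouad_spec_reg_def E_def[symmetric] \<gamma>_def[symmetric]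
    by (rule Inf_lower[OF mem])
qed

end
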